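(* Let $R$ be an associative unital division ring over a field of characteristic $0$, equipped with two commuting derivations $\partial_x,\partial_y$ (written $F_x=\partial_x F$, $F_y=\partial_y F$). Let $\varphi\in R$ and for $n\geq1$ put $$\Theta_n=\bigl(\partial_x^{\,i-1}\partial_y^{\,j-1}\varphi\bigr)_{1\leq i,j\leq n},\qquad \theta_n=|\Theta_n|_{nn},$$ with the convention $\theta_0^{-1}:=0$, and assume all quasideterminants involved are defined and all $\theta_n$ are invertible. Then for all $n\geq1$, $$\bigl(\theta_{n,x}\theta_n^{-1}\bigr)_y=\theta_{n+1}\theta_n^{-1}-\theta_n\theta_{n-1}^{-1}.$$
   Context: A derivation of $R$ is an $F$-linear map $\partial:R\to R$ vanishing on $F$ and satisfying $\partial(FG)=\partial(F)G+F\partial(G)$. For an $n\times n$ matrix $X$ over $R$, the quasideterminant is $|X|_{ij}=x_{ij}-r_i^j(X^{ij})^{-1}c_j^i$, where $X^{ij}$ is $X$ with row $i$ and column $j$ deleted, $r_i^j$ is row $i$ without its $j$-th entry, $c_j^i$ is column $j$ without its $i$-th entry; $|X|_{11}=x_{11}$ for $n=1$. *)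

theory Defs
  imports "Jordan_Normal_Form.Determinant"
begin

definition central_subfield :: "'a::division_ring set \<Rightarrow> bool" where
  "central_subfield K \<longleftrightarrow> 0 \<in> K \<and> 1 \<in> K \<and>
     (\<forall>a\<in>K. \<forall>b\<in>K. a + b \<in> K \<and> a - b \<in> K \<and> a * b \<in> K) \<and>
     (\<forall>a\<in>K. inverse a \<in> K) \<and>
     (\<forall>c\<in>K. \<forall>a. c * a = a * c)"

definition is_derivation :: "'a::division_ring set \<Rightarrow> ('a \<Rightarrow> 'a) \<Rightarrow> bool" where
  "is_derivation K d \<longleftrightarrow>
     (\<forall>a b. d (a + b) = d a + d b) \<and>
     (\<forall>c\<in>K. \<forall>a. d (c * a) = c * d a) \<and>
     (\<forall>c\<in>K. d c = 0) \<and>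
     (\<forall>a b. d (a * b) = d a * b + a * d b)"

text \<open>Inverse of an invertible square matrix (any two-sided inverse; it is unique).\<close>
definition mat_inv :: "'a::semiring_1 mat \<Rightarrow> 'a mat" where
  "mat_inv A = (SOME B. inverts_mat A B \<and> inverts_mat B A)"

text \<open>Quasideterminant |X|_{ij} (0-based indices), for X square of size n:
  x_ij - r_i^j (X^{ij})^{-1} c_j^i.  For n = 1 the correction term is the empty sum 0.\<close>
definition quasidet :: "'a::division_ring mat \<Rightarrow> nat \<Rightarrow> nat \<Rightarrow> 'a" where
  "quasidet X i j =
     (let n = dim_row X;
          r = vec (n - 1) (\<lambda>a. X $$ (i, insert_index j a));
          c = vec (n - 1) (\<lambda>b. X $$ (insert_index i b, j))
      in X $$ (i, j) - r \<bullet> (mat_inv (mat_delete X i j) *\<^sub>v c))"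

definition quasidet_defined :: "'a::division_ring mat \<Rightarrow> nat \<Rightarrow> nat \<Rightarrow> bool" where
  "quasidet_defined X i j \<longleftrightarrow> invertible_mat (mat_delete X i j)"

text \<open>Theta_n = (dx^(i-1) dy^(j-1) phi)_{1<=i,j<=n}, here with 0-based indices.\<close>
definition Theta :: "('a \<Rightarrow> 'a) \<Rightarrow> ('a \<Rightarrow> 'a) \<Rightarrow> 'a \<Rightarrow> nat \<Rightarrow> 'a mat" where
  "Theta dx dy \<phi> n = mat n n (\<lambda>(i, j). (dx ^^ i) ((dy ^^ j) \<phi>))"

definition theta :: "('a \<Rightarrow> 'a) \<Rightarrow> ('a \<Rightarrow> 'a) \<Rightarrow> 'a::division_ring \<Rightarrow> nat \<Rightarrow> 'a" where
  "theta dx dy \<phi> n = quasidet (Theta dx dy \<phi> n) (n - 1) (n - 1)"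

definition theta_inv :: "('a \<Rightarrow> 'a) \<Rightarrow> ('a \<Rightarrow> 'a) \<Rightarrow> 'a::division_ring \<Rightarrow> nat \<Rightarrow> 'a" where
  "theta_inv dx dy \<phi> n = (if n = 0 then 0 else inverse (theta dx dy \<phi> n))"

end

theory Submission imports Defs begin

lemma mat_delete_Theta:
  "mat_delete (Theta dx dy \<phi> (Suc m)) m m = Theta dx dy \<phi> m"
  unfolding mat_delete_def Theta_def by (rule eq_matI) auto

lemma inv_props:
  assumes "invertible_mat (A :: 'a::semiring_1 mat)"
  shows "A * mat_inv A = 1\<^sub>m (dim_row A)" "mat_inv A * A = 1\<^sub>m (dim_row A)"
    "dim_row (mat_inv A) = dim_row A" "dim_col (mat_inv A) = dim_row A"
proof -
  from assms have sq: "dim_col A = dim_row A" unfolding invertible_mat_def square_mat.simps by auto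
  from assms obtain B where "inverts_mat A B \<and> inverts_mat B A" unfolding invertible_mat_def by auto
  hence h: "inverts_mat A (mat_inv A) \<and> inverts_mat (mat_inv A) A"
    unfolding mat_inv_def by (rule someI)
  hence h1: "A * mat_inv A = 1\<^sub>m (dim_row A)" and h2: "mat_inv A * A = 1\<^sub>m (dim_row (mat_inv A))"
    unfolding inverts_mat_def by auto
  have dc: "dim_col (mat_inv A) = dim_row A" using arg_cong[OF h1, of dim_col] by simp
  have dr: "dim_row (mat_inv A) = dim_row A" using arg_cong[OF h2, of dim_col] sq by simp
  show "A * mat_inv A = 1\<^sub>m (dim_row A)" "mat_inv A * A = 1\<^sub>m (dim_row A)"
    "dim_row (mat_inv A) = dim_row A" "dim_col (mat_inv A) = dim_row A"
    using h1 h2 dc dr by auto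
qed

definition uu :: "('a \<Rightarrow> 'a) \<Rightarrow> ('a \<Rightarrow> 'a) \<Rightarrow> 'a \<Rightarrow> nat \<Rightarrow> nat \<Rightarrow> 'a" where
  "uu dx dy \<phi> i j = (dx ^^ i) ((dy ^^ j) \<phi>)"

definition bb :: "('a \<Rightarrow> 'a) \<Rightarrow> ('a \<Rightarrow> 'a) \<Rightarrow> 'a::division_ring \<Rightarrow> nat \<Rightarrow> nat \<Rightarrow> nat \<Rightarrow> 'a" where
  "bb dx dy \<phi> m i j = mat_inv (Theta dx dy \<phi> m) $$ (i, j)"

lemma inv_sums:
  assumes "invertible_mat (Theta dx dy \<phi> m)" "i < m" "j < m"
  shows "(\<Sum>k<m. uu dx dy \<phi> i k * bb dx dy \<phi> m k j) = (if i = j then 1 else 0)"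
    "(\<Sum>k<m. bb dx dy \<phi> m i k * uu dx dy \<phi> k j) = (if i = j then 1 else 0)"
proof -
  let ?A = "Theta dx dy \<phi> m"
  have d: "dim_row ?A = m" "dim_col ?A = m" unfolding Theta_def by auto
  note p = inv_props[OF assms(1), unfolded d]
  have "(?A * mat_inv ?A) $$ (i,j) = (if i = j then 1 else 0)" using p assms by simp
  moreover have "(?A * mat_inv ?A) $$ (i,j) = (\<Sum>k<m. uu dx dy \<phi> i k * bb dx dy \<phi> m k j)"
    using p(3,4) assms d unfolding scalar_prod_def bb_def uu_def
    by (auto simp: Theta_def lessThan_atLeast0 scalar_prod_def intro!: sum.cong)
  ultimately show "(\<Sum>k<m. uu dx dy \<phi> i k * bb dx dy \<phi> m k j) = (if i = j then 1 else 0)" by simp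
  have "(mat_inv ?A * ?A) $$ (i,j) = (if i = j then 1 else 0)" using p assms by simp
  moreover have "(mat_inv ?A * ?A) $$ (i,j) = (\<Sum>k<m. bb dx dy \<phi> m i k * uu dx dy \<phi> k j)"
    using p(3,4) assms d unfolding scalar_prod_def bb_def uu_def
    by (auto simp: Theta_def lessThan_atLeast0 scalar_prod_def intro!: sum.cong)
  ultimately show "(\<Sum>k<m. bb dx dy \<phi> m i k * uu dx dy \<phi> k j) = (if i = j then 1 else 0)" by simp
qed

lemma theta_sum:
  assumes "invertible_mat (Theta dx dy \<phi> m)"
  shows "theta dx dy \<phi> (Suc m) = uu dx dy \<phi> m m -
     (\<Sum>a<m. uu dx dy \<phi> m a * (\<Sum>b<m. bb dx dy \<phi> m a b * uu dx dy \<phi> b m))"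
proof -
  have d: "dim_row (Theta dx dy \<phi> m) = m" "dim_row (Theta dx dy \<phi> (Suc m)) = Suc m" unfolding Theta_def by auto
  note p = inv_props[OF assms, unfolded d]
  show ?thesis
  unfolding theta_def quasidet_def Let_def diff_Suc_1 mat_delete_Theta d
  using p by (simp add: scalar_prod_def bb_def uu_def lessThan_atLeast0 Theta_def)
qed

locale deriv =
  fixes d :: "'a::division_ring \<Rightarrow> 'a"
  assumes d_add: "\<And>a b. d (a + b) = d a + d b"
    and d_mult: "\<And>a b. d (a * b) = d a * b + a * d b"
begin

lemma d_zero: "d 0 = 0"
  using d_add[of 0 0] by simp

lemma d_one: "d 1 = 0"
  using d_mult[of 1 1] by simp

lemma d_minus: "d (- a) = - d a"
  using d_add[of a "- a"] d_zero by (metis add.right_inverse neg_eq_iff_add_eq_0)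

lemma d_diff: "d (a - b) = d a - d b"
  using d_add[of a "- b"] d_minus[of b] by simp

lemma d_sum: "d (sum f A) = sum (\<lambda>x. d (f x)) A"
  by (induction A rule: infinite_finite_induct) (auto simp: d_zero d_add)

lemma d_if01: "d (if P then 1 else 0) = 0"
  by (simp add: d_zero d_one)

lemma d_inverse:
  assumes "a \<noteq> 0"
  shows "d (inverse a) = - (inverse a * d a * inverse a)"
proof -
  have "0 = d (a * inverse a)" using assms d_one by simp
  also have "\<dots> = d a * inverse a + a * d (inverse a)" by (rule d_mult)
  finally have "a * d (inverse a) = - (d a * inverse a)" by (simp add: eq_neg_iff_add_eq_0 add.commute)
  hence "inverse a * (a * d (inverse a)) = inverse a * (- (d a * inverse a))" by simp
  thus ?thesis using assms by (simp add: mult.assoc[symmetric])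
qed

end

locale tsetup =
  dX: deriv dx + dY: deriv dy
  for dx dy :: "'a::division_ring \<Rightarrow> 'a" +
  fixes \<phi> :: 'a
  assumes comm: "\<And>a. dx (dy a) = dy (dx a)"
    and invt: "\<And>m. invertible_mat (Theta dx dy \<phi> m)"
begin

abbreviation "u \<equiv> uu dx dy \<phi>"
abbreviation "b \<equiv> bb dx dy \<phi>"

lemma u_dx: "dx (u i j) = u (Suc i) j"
  by (simp add: uu_def)

lemma dy_funpow: "dy ((dx ^^ i) a) = (dx ^^ i) (dy a)"
  by (induction i) (auto simp: comm[symmetric])

lemma u_dy: "dy (u i j) = u i (Suc j)"
  by (simp add: uu_def dy_funpow)

lemma I1: "i < m \<Longrightarrow> j < m \<Longrightarrow> (\<Sum>k<m. u i k * b m k j) = (if i = j then 1 else 0)"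
  using inv_sums(1)[OF invt] by blast

lemma I2: "i < m \<Longrightarrow> j < m \<Longrightarrow> (\<Sum>k<m. b m i k * u k j) = (if i = j then 1 else 0)"
  using inv_sums(2)[OF invt] by blast

lemma solve_left:
  assumes h: "\<And>i. i < m \<Longrightarrow> (\<Sum>k<m. u i k * Y k) = Z i" and p: "p < m"
  shows "Y p = (\<Sum>i<m. b m p i * Z i)"
proof -
  have "(\<Sum>k<m. (if p = k then 1 else 0) * Y k) = (\<Sum>k<m. if p = k then Y k else 0)"
    by (intro sum.cong) auto
  hence "Y p = (\<Sum>k<m. (if p = k then 1 else 0) * Y k)" using p by simp
  also have "\<dots> = (\<Sum>k<m. (\<Sum>i<m. b m p i * u i k) * Y k)"
    using p by (intro sum.cong) (auto simp: I2)
  also have "\<dots> = (\<Sum>i<m. b m p i * (\<Sum>k<m. u i k * Y k))"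
    by (simp add: sum_distrib_left sum_distrib_right mult.assoc) (rule sum.swap)
  also have "\<dots> = (\<Sum>i<m. b m p i * Z i)" by (intro sum.cong) (auto simp: h)
  finally show ?thesis .
qed

lemma solve_right:
  assumes h: "\<And>j. j < m \<Longrightarrow> (\<Sum>k<m. Y k * u k j) = Z j" and q: "q < m"
  shows "Y q = (\<Sum>j<m. Z j * b m j q)"
proof -
  have "(\<Sum>k<m. Y k * (if k = q then 1 else 0)) = (\<Sum>k<m. if k = q then Y k else 0)"
    by (intro sum.cong) auto
  hence "Y q = (\<Sum>k<m. Y k * (if k = q then 1 else 0))" using q by simp
  also have "\<dots> = (\<Sum>k<m. Y k * (\<Sum>j<m. u k j * b m j q))"
    using q by (intro sum.cong) (auto simp: I1)
  also have "\<dots> = (\<Sum>j<m. (\<Sum>k<m. Y k * u k j) * b m j q)"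
    by (simp add: sum_distrib_left sum_distrib_right mult.assoc) (rule sum.swap)
  also have "\<dots> = (\<Sum>j<m. Z j * b m j q)" by (intro sum.cong) (auto simp: h)
  finally show ?thesis .
qed


lemma delta_shift_right:
  fixes f :: "nat \<Rightarrow> 'b::semiring_1"
  assumes "q < Suc n'"
  shows "(\<Sum>i<n'. f i * (if Suc i = q then 1 else 0)) = (if 1 \<le> q then f (q - 1) else 0)"
proof (cases q)
  case 0 thus ?thesis by simp
next
  case (Suc q')
  have "(\<Sum>i<n'. f i * (if Suc i = q then 1 else 0)) = (\<Sum>i<n'. if i = q' then f i else 0)"
    by (intro sum.cong) (auto simp: Suc)
  thus ?thesis using assms Suc by simp
qed

lemma delta_shift_left:
  fixes f :: "nat \<Rightarrow> 'b::semiring_1"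
  assumes "p < Suc n'"
  shows "(\<Sum>j<n'. (if p = Suc j then 1 else 0) * f j) = (if 1 \<le> p then f (p - 1) else 0)"
proof (cases p)
  case 0 thus ?thesis by simp
next
  case (Suc p')
  have "(\<Sum>j<n'. (if p = Suc j then 1 else 0) * f j) = (\<Sum>j<n'. if p' = j then f j else 0)"
    by (intro sum.cong) (auto simp: Suc)
  thus ?thesis using assms Suc by simp
qed

lemma Dx:
  assumes p: "p < n" and q: "q < n"
  shows "dx (b n p q) = - ((if 1 \<le> q then b n p (q - 1) else 0)
            + b n p (n - 1) * (\<Sum>l<n. u n l * b n l q))"
proof -
  obtain n' where n: "n = Suc n'" using p by (cases n) auto
  define T where "T i = (\<Sum>k<n. u (Suc i) k * b n k q)" for i
  have h: "(\<Sum>k<n. u i k * dx (b n k q)) = - T i" if i: "i < n" for i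
  proof -
    have "0 = dx (\<Sum>k<n. u i k * b n k q)" using I1[OF i q] by (simp add: dX.d_if01)
    also have "\<dots> = T i + (\<Sum>k<n. u i k * dx (b n k q))"
      unfolding dX.d_sum dX.d_mult u_dx T_def by (simp add: sum.distrib)
    finally show ?thesis by (simp add: eq_neg_iff_add_eq_0 add.commute)
  qed
  have "dx (b n p q) = (\<Sum>i<n. b n p i * - T i)"
    by (rule solve_left[OF h p])
  also have "\<dots> = - (\<Sum>i<n. b n p i * T i)" by (simp add: sum_negf)
  also have "(\<Sum>i<n. b n p i * T i) = (\<Sum>i<n'. b n p i * T i) + b n p n' * T n'"
    unfolding n by simp
  also have "(\<Sum>i<n'. b n p i * T i) = (\<Sum>i<n'. b n p i * (if Suc i = q then 1 else 0))"
  proof (intro sum.cong refl)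
    fix i assume "i \<in> {..<n'}" hence "Suc i < n" using n by simp
    thus "b n p i * T i = b n p i * (if Suc i = q then 1 else 0)" unfolding T_def using I1[OF _ q] by simp
  qed
  also have "\<dots> = (if 1 \<le> q then b n p (q - 1) else 0)"
    using q n by (intro delta_shift_right) simp
  finally show ?thesis unfolding T_def n by simp
qed

lemma Dy:
  assumes p: "p < n" and q: "q < n"
  shows "dy (b n p q) = - ((if 1 \<le> p then b n (p - 1) q else 0)
            + (\<Sum>k<n. b n p k * u k n) * b n (n - 1) q)"
proof -
  obtain n' where n: "n = Suc n'" using p by (cases n) auto
  define T where "T j = (\<Sum>k<n. b n p k * u k (Suc j))" for j
  have h: "(\<Sum>k<n. dy (b n p k) * u k j) = - T j" if j: "j < n" for j
  proof -
    have "0 = dy (\<Sum>k<n. b n p k * u k j)" using I2[OF p j] by (simp add: dY.d_if01)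
    also have "\<dots> = (\<Sum>k<n. dy (b n p k) * u k j) + T j"
      unfolding dY.d_sum dY.d_mult u_dy T_def by (simp add: sum.distrib)
    finally show ?thesis by (simp add: eq_neg_iff_add_eq_0)
  qed
  have "dy (b n p q) = (\<Sum>j<n. - T j * b n j q)"
    by (rule solve_right[OF h q])
  also have "\<dots> = - (\<Sum>j<n. T j * b n j q)" by (simp add: sum_negf)
  also have "(\<Sum>j<n. T j * b n j q) = (\<Sum>j<n'. T j * b n j q) + T n' * b n n' q"
    unfolding n by simp
  also have "(\<Sum>j<n'. T j * b n j q) = (\<Sum>j<n'. (if p = Suc j then 1 else 0) * b n j q)"
  proof (intro sum.cong refl)
    fix j assume "j \<in> {..<n'}" hence "Suc j < n" using n by simp
    thus "T j * b n j q = (if p = Suc j then 1 else 0) * b n j q" unfolding T_def using I2[OF p] by simp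
  qed
  also have "\<dots> = (if 1 \<le> p then b n (p - 1) q else 0)"
    using p n by (intro delta_shift_left) simp
  finally show ?thesis unfolding T_def n by simp
qed


lemma F1: "theta dx dy \<phi> (Suc m) * b (Suc m) m m = 1"
proof -
  let ?N = "Suc m"
  define \<beta> where "\<beta> = b ?N m m"
  define G where "G k = (\<Sum>i<m. b m k i * u i m)" for k
  have h: "(\<Sum>k<m. u i k * b ?N k m) = - (u i m * \<beta>)" if i: "i < m" for i
  proof -
    have "(\<Sum>k<?N. u i k * b ?N k m) = 0" using I1[of i ?N m] i by simp
    thus ?thesis unfolding \<beta>_def by (simp add: eq_neg_iff_add_eq_0)
  qed
  have Y: "b ?N k m = - (G k * \<beta>)" if k: "k < m" for k
  proof -
    have "b ?N k m = (\<Sum>i<m. b m k i * - (u i m * \<beta>))" by (rule solve_left[OF h k])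
    also have "\<dots> = - (G k * \<beta>)" unfolding G_def
      by (simp add: sum_negf sum_distrib_right mult.assoc)
    finally show ?thesis .
  qed
  have "1 = (\<Sum>k<?N. u m k * b ?N k m)" using I1[of m ?N m] by simp
  also have "\<dots> = (\<Sum>k<m. u m k * b ?N k m) + u m m * \<beta>" unfolding \<beta>_def by simp
  also have "(\<Sum>k<m. u m k * b ?N k m) = (\<Sum>k<m. - (u m k * G k * \<beta>))"
    by (intro sum.cong refl) (simp add: Y mult.assoc)
  also have "\<dots> = - ((\<Sum>k<m. u m k * G k) * \<beta>)" by (simp add: sum_negf sum_distrib_right)
  finally have "1 = (u m m - (\<Sum>k<m. u m k * G k)) * \<beta>" by (simp add: algebra_simps)
  moreover have "theta dx dy \<phi> ?N = u m m - (\<Sum>k<m. u m k * G k)"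
    unfolding G_def by (rule theta_sum[OF invt])
  ultimately show ?thesis unfolding \<beta>_def by simp
qed

lemma beta_inv: "inverse (theta dx dy \<phi> (Suc m)) = b (Suc m) m m"
  using F1 by (rule inverse_unique)

lemma beta_nz: "b (Suc m) m m \<noteq> 0"
  using F1[of m] by auto

lemma F2:
  assumes i: "i < Suc m" and q: "q < Suc m"
  shows "b (Suc m) i q = b (Suc (Suc m)) i q
     - b (Suc (Suc m)) i (Suc m) * inverse (b (Suc (Suc m)) (Suc m) (Suc m)) * b (Suc (Suc m)) (Suc m) q"
proof -
  let ?n = "Suc (Suc m)" and ?n' = "Suc m"
  define \<beta> where "\<beta> = b ?n ?n' ?n'"
  have bnz: "\<beta> \<noteq> 0" unfolding \<beta>_def by (rule beta_nz)
  define Y where "Y k = b ?n i k - b ?n i ?n' * inverse \<beta> * b ?n ?n' k" for k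
  have h: "(\<Sum>k<?n'. Y k * u k j) = (if i = j then 1 else 0)" if j: "j < ?n'" for j
  proof -
    have e1: "(\<Sum>k<?n'. b ?n i k * u k j) + b ?n i ?n' * u ?n' j = (if i = j then 1 else 0)"
      using I2[of i ?n j] i j by simp
    have e2: "(\<Sum>k<?n'. b ?n ?n' k * u k j) + \<beta> * u ?n' j = 0"
      using I2[of ?n' ?n j] j unfolding \<beta>_def by simp
    have "(\<Sum>k<?n'. Y k * u k j) = (\<Sum>k<?n'. b ?n i k * u k j)
        - b ?n i ?n' * inverse \<beta> * (\<Sum>k<?n'. b ?n ?n' k * u k j)"
      unfolding Y_def by (simp add: algebra_simps sum_subtractf sum_distrib_left)
    also have "(\<Sum>k<?n'. b ?n ?n' k * u k j) = - (\<beta> * u ?n' j)"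
      using e2 by (simp add: eq_neg_iff_add_eq_0)
    also have "b ?n i ?n' * inverse \<beta> * - (\<beta> * u ?n' j) = - (b ?n i ?n' * u ?n' j)"
      using bnz by (simp add: mult.assoc[symmetric]) (simp add: mult.assoc)
    finally show ?thesis using e1 by (simp add: algebra_simps)
  qed
  have "Y q = (\<Sum>j<?n'. (if i = j then 1 else 0) * b ?n' j q)" by (rule solve_right[OF h q])
  also have "\<dots> = (\<Sum>j<?n'. if i = j then b ?n' j q else 0)" by (intro sum.cong) auto
  also have "\<dots> = b ?n' i q" using i by simp
  finally show ?thesis unfolding Y_def \<beta>_def by simp
qed


lemma main:
  "dy (dx (theta dx dy \<phi> (Suc m)) * inverse (theta dx dy \<phi> (Suc m))) =
     theta dx dy \<phi> (Suc (Suc m)) * inverse (theta dx dy \<phi> (Suc m))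
   - theta dx dy \<phi> (Suc m) * theta_inv dx dy \<phi> m"
proof -
  let ?N = "Suc m"
  define \<beta> where "\<beta> = b ?N m m"
  define \<theta> where "\<theta> = theta dx dy \<phi> ?N"
  define R where "R = (\<Sum>l<?N. u ?N l * b ?N l m)"
  define G where "G l = (\<Sum>k<?N. b ?N l k * u k ?N)" for l
  define X where "X = (if 1 \<le> m then b ?N m (m - 1) else 0)"
  have bnz: "\<beta> \<noteq> 0" unfolding \<beta>_def by (rule beta_nz)
  have ith: "inverse \<theta> = \<beta>" unfolding \<theta>_def \<beta>_def by (rule beta_inv)
  have th: "\<theta> = inverse \<beta>" using ith by (metis inverse_inverse_eq)
  have dxb: "dx \<beta> = - (X + \<beta> * R)" unfolding \<beta>_def X_def R_def using Dx[of m ?N m] by simp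
  have c1: "inverse \<beta> * (\<beta> * z) = z" for z using bnz by (simp add: mult.assoc[symmetric])
  have "dx \<theta> * inverse \<theta> = - (inverse \<beta> * dx \<beta> * inverse \<beta>) * \<beta>"
    unfolding th ith using dX.d_inverse[OF bnz] by simp
  also have "\<dots> = inverse \<beta> * X + R" using bnz unfolding dxb
    by (simp add: mult.assoc distrib_left right_diff_distrib c1)
  finally have s1: "dx \<theta> * inverse \<theta> = inverse \<beta> * X + R" .
  have dyb: "dy (b ?N l m) = - ((if 1 \<le> l then b ?N (l - 1) m else 0) + G l * \<beta>)" if "l < ?N" for l
    using Dy[OF that, of m] unfolding G_def \<beta>_def by simp
  have "dy R = (\<Sum>l<?N. u ?N (Suc l) * b ?N l m)
      - (\<Sum>l<?N. u ?N l * (if 1 \<le> l then b ?N (l - 1) m else 0))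
      - (\<Sum>l<?N. u ?N l * G l) * \<beta>"
  proof -
    have "dy R = (\<Sum>l<?N. u ?N (Suc l) * b ?N l m + u ?N l * dy (b ?N l m))"
      unfolding R_def dY.d_sum dY.d_mult u_dy ..
    also have "\<dots> = (\<Sum>l<?N. u ?N (Suc l) * b ?N l m - u ?N l * (if 1 \<le> l then b ?N (l - 1) m else 0)
         - u ?N l * G l * \<beta>)"
      by (intro sum.cong refl) (simp add: dyb algebra_simps)
    finally show ?thesis by (simp only: sum_subtractf sum_distrib_right)
  qed
  also have "(\<Sum>l<?N. u ?N (Suc l) * b ?N l m) = (\<Sum>l<m. u ?N (Suc l) * b ?N l m) + u ?N ?N * \<beta>"
    unfolding \<beta>_def by simp
  also have "(\<Sum>l<?N. u ?N l * (if 1 \<le> l then b ?N (l - 1) m else 0)) = (\<Sum>l<m. u ?N (Suc l) * b ?N l m)"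
    unfolding sum.lessThan_Suc_shift by simp
  finally have "dy R = (u ?N ?N - (\<Sum>l<?N. u ?N l * G l)) * \<beta>" by (simp add: algebra_simps)
  also have "u ?N ?N - (\<Sum>l<?N. u ?N l * G l) = theta dx dy \<phi> (Suc ?N)"
    unfolding G_def by (rule theta_sum[OF invt, symmetric])
  finally have dyR: "dy R = theta dx dy \<phi> (Suc ?N) * inverse \<theta>" unfolding ith .
  have dyX: "dy (inverse \<beta> * X) = - (\<theta> * theta_inv dx dy \<phi> m)"
  proof (cases m)
    case 0 thus ?thesis unfolding X_def theta_inv_def by (simp add: dY.d_zero)
  next
    case (Suc m')
    have X: "X = b ?N m m'" unfolding X_def Suc by simp
    have dyb': "dy \<beta> = - (b ?N m' m + G m * \<beta>)" unfolding \<beta>_def G_def using Dy[of m ?N m] Suc by simp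
    have dyX': "dy X = - (b ?N m' m' + G m * X)" unfolding X G_def using Dy[of m ?N m'] Suc by simp
    have f2: "b m m' m' = b ?N m' m' - b ?N m' m * inverse \<beta> * X"
      unfolding X \<beta>_def Suc using F2[of m' m' m'] by simp
    have ti: "theta_inv dx dy \<phi> m = b m m' m'" unfolding theta_inv_def Suc using beta_inv[of m'] by simp
    have cancel: "\<beta> * (inverse \<beta> * z) = z" for z using bnz by (simp add: mult.assoc[symmetric])
    have "dy (inverse \<beta> * X) = - (inverse \<beta> * dy \<beta> * inverse \<beta>) * X + inverse \<beta> * dy X"
      using dY.d_inverse[OF bnz] by (simp add: dY.d_mult)
    also have "\<dots> = - (inverse \<beta> * b m m' m')"
      unfolding dyb' dyX' f2 by (simp add: algebra_simps cancel)
    finally show ?thesis unfolding th ti .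
  qed
  show ?thesis
    using s1 dyR dyX unfolding \<theta>_def[symmetric] by (simp add: dY.d_add)
qed

end

theorem proposition3p12:
  fixes K :: "'a::{division_ring, ring_char_0} set"
    and dx dy :: "'a \<Rightarrow> 'a" and \<phi> :: 'a and n :: nat
  assumes "central_subfield K"
    and "is_derivation K dx" and "is_derivation K dy"
    and "\<And>a. dx (dy a) = dy (dx a)"
    and "\<And>m. m \<ge> 1 \<Longrightarrow> quasidet_defined (Theta dx dy \<phi> m) (m - 1) (m - 1)"
    and "\<And>m. m \<ge> 1 \<Longrightarrow> theta dx dy \<phi> m \<noteq> 0"
    and "n \<ge> 1"
  shows "dy (dx (theta dx dy \<phi> n) * inverse (theta dx dy \<phi> n)) =
           theta dx dy \<phi> (n + 1) * inverse (theta dx dy \<phi> n)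
         - theta dx dy \<phi> n * theta_inv dx dy \<phi> (n - 1)"
proof -
  have inv: "invertible_mat (Theta dx dy \<phi> m)" for m
    using assms(5)[of "Suc m"] unfolding quasidet_defined_def by (simp add: mat_delete_Theta)
  interpret tsetup dx dy \<phi>
  proof
    show "dx (a + b) = dx a + dx b" "dx (a * b) = dx a * b + a * dx b"
      "dy (a + b) = dy a + dy b" "dy (a * b) = dy a * b + a * dy b" for a b
      using assms(2,3) unfolding is_derivation_def by auto
  qed (use assms(4) inv in auto)
  obtain m where n: "n = Suc m" using assms(7) by (cases n) auto
  show ?thesis using main[of m] unfolding n by simp
qed

end
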